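(* Let $G$ be a $W(K_3)$-free finite simple graph and let $x_1,x_2,x_3$ be three vertices of $G$ which are pairwise adjacent (form a triangle). Then $$\alpha_2\Big(G\setminus \bigcup_{i=1}^3 N_G(x_i)\Big)\geq \alpha_2(G)-2.$$
   Context: For a vertex $x$, $N_G(x)$ is its set of neighbours and $N_G[x]=N_G(x)\cup\{x\}$. For $U\subseteq V(G)$, $G\setminus U$ is the graph with vertex set $V(G)\setminus U$ and edge set $\{e\in E(G): e\cap U=\emptyset\}$. The star with center $x$ is the subgraph with vertex set $N_G[x]$ and edges $\{xy:y\in N_G(x)\}$. A star packing of $G$ is a family of stars of $G$ whose vertex sets are pairwise disjoint; $\alpha_2(G)$, the star packing number, is the maximum size of a star packing of $G$. A whiskered triangle $W(K_3)$ is the graph obtained from a triangle by attaching a pendant edge (to a new vertex of degree one) at each of its three vertices; $G$ is $W(K_3)$-free if it has no induced subgraph isomorphic to $W(K_3)$. *)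

theory Defs
  imports Main
begin

definition simple_graph :: "'a set \<Rightarrow> ('a \<Rightarrow> 'a \<Rightarrow> bool) \<Rightarrow> bool" where
  "simple_graph V E \<longleftrightarrow> finite V \<and> (\<forall>x y. E x y \<longrightarrow> E y x) \<and> (\<forall>x. \<not> E x x)
     \<and> (\<forall>x y. E x y \<longrightarrow> x \<in> V \<and> y \<in> V)"

definition nbhd :: "'a set \<Rightarrow> ('a \<Rightarrow> 'a \<Rightarrow> bool) \<Rightarrow> 'a \<Rightarrow> 'a set" where
  "nbhd V E x = {y \<in> V. E x y}"

definition cnbhd :: "'a set \<Rightarrow> ('a \<Rightarrow> 'a \<Rightarrow> bool) \<Rightarrow> 'a \<Rightarrow> 'a set" where
  "cnbhd V E x = insert x (nbhd V E x)"

definition del_verts_V :: "'a set \<Rightarrow> 'a set \<Rightarrow> 'a set" where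
  "del_verts_V V U = V - U"

definition del_verts_E :: "'a set \<Rightarrow> ('a \<Rightarrow> 'a \<Rightarrow> bool) \<Rightarrow> 'a set \<Rightarrow> ('a \<Rightarrow> 'a \<Rightarrow> bool)" where
  "del_verts_E V E U = (\<lambda>x y. E x y \<and> x \<in> V - U \<and> y \<in> V - U)"

text \<open>A star is determined by its center x (vertex set N[x]); a star packing is
a set of centers whose closed neighbourhoods are pairwise disjoint.\<close>
definition star_packing :: "'a set \<Rightarrow> ('a \<Rightarrow> 'a \<Rightarrow> bool) \<Rightarrow> 'a set \<Rightarrow> bool" where
  "star_packing V E S \<longleftrightarrow> S \<subseteq> V \<and>
     (\<forall>x\<in>S. \<forall>y\<in>S. x \<noteq> y \<longrightarrow> cnbhd V E x \<inter> cnbhd V E y = {})"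

definition star_packing_number :: "'a set \<Rightarrow> ('a \<Rightarrow> 'a \<Rightarrow> bool) \<Rightarrow> nat" where
  "star_packing_number V E = Max (card ` {S. star_packing V E S})"

definition induced_whiskered_triangle ::
  "'a set \<Rightarrow> ('a \<Rightarrow> 'a \<Rightarrow> bool) \<Rightarrow> 'a \<Rightarrow> 'a \<Rightarrow> 'a \<Rightarrow> 'a \<Rightarrow> 'a \<Rightarrow> 'a \<Rightarrow> bool" where
  "induced_whiskered_triangle V E a1 a2 a3 b1 b2 b3 \<longleftrightarrow>
     {a1, a2, a3, b1, b2, b3} \<subseteq> V \<and> distinct [a1, a2, a3, b1, b2, b3] \<and>
     E a1 a2 \<and> E a2 a3 \<and> E a1 a3 \<and> E a1 b1 \<and> E a2 b2 \<and> E a3 b3 \<and>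
     \<not> E a1 b2 \<and> \<not> E a1 b3 \<and> \<not> E a2 b1 \<and> \<not> E a2 b3 \<and> \<not> E a3 b1 \<and> \<not> E a3 b2 \<and>
     \<not> E b1 b2 \<and> \<not> E b1 b3 \<and> \<not> E b2 b3"

definition W_K3_free :: "'a set \<Rightarrow> ('a \<Rightarrow> 'a \<Rightarrow> bool) \<Rightarrow> bool" where
  "W_K3_free V E \<longleftrightarrow> \<not> (\<exists>a1 a2 a3 b1 b2 b3. induced_whiskered_triangle V E a1 a2 a3 b1 b2 b3)"

end

theory Submission
  imports Defs
begin

lemma share:
  assumes "star_packing V E S" "s \<in> S" "t \<in> S" "s \<noteq> t" "u \<in> cnbhd V E s" "u \<in> cnbhd V E t"
  shows False
  using assms unfolding star_packing_def by blast

lemma core: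
  assumes g: "simple_graph V E" and w: "W_K3_free V E"
    and y: "E y1 y2" "E y2 y3" "E y1 y3"
    and p: "star_packing V E S" and s: "s1 \<in> S" "s2 \<in> S" "s3 \<in> S"
    and d: "s1 \<noteq> s2" "s2 \<noteq> s3" "s1 \<noteq> s3"
    and a: "E y1 s1" "E y2 s2" "E y3 s3"
  shows False
proof -
  have sym: "\<And>x y. E x y \<Longrightarrow> E y x" and irr: "\<And>x. \<not> E x x"
    and inV: "\<And>x y. E x y \<Longrightarrow> x \<in> V \<and> y \<in> V"
    using g unfolding simple_graph_def by blast+
  have mem: "\<And>x y. E x y \<Longrightarrow> y \<in> cnbhd V E x"
    using inV unfolding cnbhd_def nbhd_def by blast
  have self: "\<And>x. x \<in> cnbhd V E x" unfolding cnbhd_def by blast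
  note sh = share[OF p]
  have "induced_whiskered_triangle V E y1 y2 y3 s1 s2 s3"
    unfolding induced_whiskered_triangle_def
  proof (intro conjI)
    show "{y1, y2, y3, s1, s2, s3} \<subseteq> V" using inV y a by blast
    show "distinct [y1, y2, y3, s1, s2, s3]"
      using d irr y a sh[OF s(1) s(3)] sh[OF s(1) s(2)] sh[OF s(2) s(3)] sh[OF s(2) s(1)]
        sh[OF s(3) s(1)] sh[OF s(3) s(2)] mem sym self
      by (simp; metis)
    show "\<not> E y1 s2" using sh[OF s(1) s(2) d(1)] mem sym a by blast
    show "\<not> E y1 s3" using sh[OF s(1) s(3) d(3)] mem sym a by blast
    show "\<not> E y2 s1" using sh[OF s(1) s(2) d(1)] mem sym a by blast
    show "\<not> E y2 s3" using sh[OF s(2) s(3) d(2)] mem sym a by blast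
    show "\<not> E y3 s1" using sh[OF s(1) s(3) d(3)] mem sym a by blast
    show "\<not> E y3 s2" using sh[OF s(2) s(3) d(2)] mem sym a by blast
    show "\<not> E s1 s2" using sh[OF s(1) s(2) d(1)] mem self by blast
    show "\<not> E s1 s3" using sh[OF s(1) s(3) d(3)] mem self by blast
    show "\<not> E s2 s3" using sh[OF s(2) s(3) d(2)] mem self by blast
  qed (use y a in auto)
  then show False using w unfolding W_K3_free_def by blast
qed

lemma three_le_two:
  assumes "finite A" "\<And>a b c. a \<in> A \<Longrightarrow> b \<in> A \<Longrightarrow> c \<in> A \<Longrightarrow> a \<noteq> b \<Longrightarrow> b \<noteq> c \<Longrightarrow> a \<noteq> c \<Longrightarrow> False"
  shows "card A \<le> 2"
proof (rule ccontr)
  assume "\<not> card A \<le> 2"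
  then have "3 \<le> card A" by simp
  then obtain B where "B \<subseteq> A" "card B = 3" using obtain_subset_with_card_n by metis
  then show False using assms(2) by (auto simp: card_3_iff)
qed

lemma spn_ex:
  assumes "finite V"
  shows "\<exists>S. star_packing V E S \<and> card S = star_packing_number V E"
    and "star_packing V E S \<Longrightarrow> card S \<le> star_packing_number V E"
proof -
  have f: "finite {S. star_packing V E S}"
    by (rule finite_subset[of _ "Pow V"]) (auto simp: star_packing_def assms)
  have ne: "{S. star_packing V E S} \<noteq> {}" by (auto simp: star_packing_def intro: exI[of _ "{}"])
  have "star_packing_number V E \<in> card ` {S. star_packing V E S}"
    unfolding star_packing_number_def using f ne by (intro Max_in) auto
  then show "\<exists>S. star_packing V E S \<and> card S = star_packing_number V E" by auto
  show "star_packing V E S \<Longrightarrow> card S \<le> star_packing_number V E"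
    unfolding star_packing_number_def using f by (intro Max_ge) auto
qed

theorem lemma3p1:
  fixes V :: "'a set" and E :: "'a \<Rightarrow> 'a \<Rightarrow> bool" and x1 x2 x3 :: 'a
  assumes "simple_graph V E"
    and "W_K3_free V E"
    and "x1 \<in> V" and "x2 \<in> V" and "x3 \<in> V"
    and "E x1 x2" and "E x2 x3" and "E x1 x3"
  shows "int (star_packing_number
                (del_verts_V V (nbhd V E x1 \<union> nbhd V E x2 \<union> nbhd V E x3))
                (del_verts_E V E (nbhd V E x1 \<union> nbhd V E x2 \<union> nbhd V E x3)))
         \<ge> int (star_packing_number V E) - 2"
proof -
  define N where "N = nbhd V E x1 \<union> nbhd V E x2 \<union> nbhd V E x3"
  have g: "simple_graph V E" by fact
  have fin: "finite V" and sym: "\<And>x y. E x y \<Longrightarrow> E y x" and irr: "\<And>x. \<not> E x x"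
    and inV: "\<And>x y. E x y \<Longrightarrow> x \<in> V \<and> y \<in> V"
    using g unfolding simple_graph_def by blast+
  have mem: "\<And>x y. E x y \<Longrightarrow> y \<in> cnbhd V E x"
    using inV unfolding cnbhd_def nbhd_def by blast
  obtain S where S: "star_packing V E S" "card S = star_packing_number V E"
    using spn_ex(1)[OF fin] by blast
  have finS: "finite S" using S(1) fin unfolding star_packing_def by (meson finite_subset)
  note sh = share[OF S(1)]
  have y: "E x1 x2" "E x2 x3" "E x1 x3" "E x2 x1" "E x3 x2" "E x3 x1" using assms sym by auto
  have two: "card (S \<inter> N) \<le> 2"
  proof (rule three_le_two)
    show "finite (S \<inter> N)" using finS by simp
    fix a b c assume abc: "a \<in> S \<inter> N" "b \<in> S \<inter> N" "c \<in> S \<inter> N" "a \<noteq> b" "b \<noteq> c" "a \<noteq> c"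
    have adj: "\<And>v. v \<in> N \<Longrightarrow> E x1 v \<or> E x2 v \<or> E x3 v" unfolding N_def nbhd_def by blast
    have nsh: "\<And>s t z. s \<in> S \<Longrightarrow> t \<in> S \<Longrightarrow> s \<noteq> t \<Longrightarrow> E z s \<Longrightarrow> E z t \<Longrightarrow> False"
      using sh mem sym by blast
    have c: "\<And>y1 y2 y3 s1 s2 s3. E y1 y2 \<Longrightarrow> E y2 y3 \<Longrightarrow> E y1 y3 \<Longrightarrow> s1 \<in> S \<Longrightarrow> s2 \<in> S \<Longrightarrow> s3 \<in> S
       \<Longrightarrow> s1 \<noteq> s2 \<Longrightarrow> s2 \<noteq> s3 \<Longrightarrow> s1 \<noteq> s3 \<Longrightarrow> E y1 s1 \<Longrightarrow> E y2 s2 \<Longrightarrow> E y3 s3 \<Longrightarrow> False"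
      using core[OF g assms(2) _ _ _ S(1)] by blast
    from abc(1) adj have A: "E x1 a \<or> E x2 a \<or> E x3 a" by blast
    from abc(2) adj have B: "E x1 b \<or> E x2 b \<or> E x3 b" by blast
    from abc(3) adj have C: "E x1 c \<or> E x2 c \<or> E x3 c" by blast
    from abc have in3: "a \<in> S" "b \<in> S" "c \<in> S" by auto
    from A B C show False
      using nsh[OF in3(1) in3(2) abc(4)] nsh[OF in3(2) in3(3) abc(5)] nsh[OF in3(1) in3(3) abc(6)]
        c[OF y(1) y(2) y(3) in3(1) in3(2) in3(3)]
        c[OF y(1) y(2) y(3) in3(1) in3(3) in3(2)]
        c[OF y(1) y(2) y(3) in3(2) in3(1) in3(3)]
        c[OF y(1) y(2) y(3) in3(2) in3(3) in3(1)]
        c[OF y(1) y(2) y(3) in3(3) in3(1) in3(2)]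
        c[OF y(1) y(2) y(3) in3(3) in3(2) in3(1)]
        abc(4-6)
      by metis
  qed
  have pk: "star_packing (del_verts_V V N) (del_verts_E V E N) (S - N)"
  proof -
    have sub: "\<And>x. cnbhd (del_verts_V V N) (del_verts_E V E N) x \<subseteq> cnbhd V E x"
      unfolding cnbhd_def nbhd_def del_verts_V_def del_verts_E_def by auto
    show ?thesis using S(1) sub unfolding star_packing_def del_verts_V_def by blast
  qed
  have "card (S - N) \<le> star_packing_number (del_verts_V V N) (del_verts_E V E N)"
    using spn_ex(2)[OF _ pk] fin unfolding del_verts_V_def by auto
  moreover have "card S = card (S - N) + card (S \<inter> N)"
    using finS by (metis Int_Diff_disjoint Un_Diff_Int card_Un_disjoint finite_Diff finite_Int Int_commute)
  ultimately show ?thesis using two S(2) unfolding N_def by linarith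
qed

end
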